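(* Let $U\subset\mathbb H$ be an axially symmetric open set with $U\cap\mathbb R=\emptyset$, and let $\tilde f$ be an axially harmonic function on $U$. Suppose that $\tilde f(q)=A(q_0,r)+\underline{\omega}\,B(q_0,r)$ for $q=q_0+r\underline{\omega}\in U$, $r>0$, $\underline{\omega}\in\mathbb S$, where $A,B$ are $\mathbb H$-valued functions of class $C^2$. Then $A$ and $B$ satisfy the system $$\partial_{q_0}^2A+\partial_r^2A+\frac{2}{r}\partial_rA=0,\qquad \partial_{q_0}^2B+\partial_r^2B+\frac{2r\,\partial_rB-2B}{r^2}=0 .$$
   Context: $\mathbb H$ denotes the quaternions $q=q_0+q_1e_1+q_2e_2+q_3e_3$ with $e_1^2=e_2^2=e_3^2=-1$, $e_1e_2=-e_2e_1=e_3$, $e_2e_3=-e_3e_2=e_1$, $e_3e_1=-e_1e_3=e_2$; $\underline q=q_1e_1+q_2e_2+q_3e_3$, $\mathbb S=\{\underline q: q_1^2+q_2^2+q_3^2=1\}$. A set $U\subset\mathbb H$ is axially symmetric if $u+Iv\in U$ implies $u+Jv\in U$ for all $J\in\mathbb S$. The Fueter operator is $\mathcal D=\partial_{q_0}+\sum_{i=1}^3e_i\partial_{q_i}$ and $\Delta=\sum_{i=0}^3\partial_{q_i}^2$. A function $\tilde f$ on an axially symmetric open set $U$ (not meeting $\mathbb R$) is called axially harmonic if $\tilde f=\mathcal D f$ where $f:U\to\mathbb H$ is of class $C^3$ of the form $f(u+Jv)=\alpha(u,v)+J\beta(u,v)$ ($J\in\mathbb S$, $v>0$) with $\alpha,\beta$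 $\mathbb H$-valued, and $\Delta\tilde f=0$ on $U$. *)

theory Defs
  imports "HOL-Analysis.Analysis"
begin

text \<open>Quaternions are modelled as real^4: q = q$0 + q$1 e1 + q$2 e2 + q$3 e3.\<close>

type_synonym quat = "real^4"

definition qmult :: "quat \<Rightarrow> quat \<Rightarrow> quat" where
  "qmult p q = (\<chi> i.
     if i = 0 then p$0*q$0 - p$1*q$1 - p$2*q$2 - p$3*q$3
     else if i = 1 then p$0*q$1 + p$1*q$0 + p$2*q$3 - p$3*q$2
     else if i = 2 then p$0*q$2 - p$1*q$3 + p$2*q$0 + p$3*q$1
     else p$0*q$3 + p$1*q$2 - p$2*q$1 + p$3*q$0)"

definition e :: "4 \<Rightarrow> quat" where "e i = axis i 1"

definition qreal :: "real \<Rightarrow> quat" where "qreal x = x *\<^sub>R e 0"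

definition qS :: "quat set" where
  "qS = {q. q$0 = 0 \<and> (q$1)\<^sup>2 + (q$2)\<^sup>2 + (q$3)\<^sup>2 = 1}"

definition axially_symmetric :: "quat set \<Rightarrow> bool" where
  "axially_symmetric U \<longleftrightarrow>
     (\<forall>u v I J. I \<in> qS \<longrightarrow> J \<in> qS \<longrightarrow> qreal u + v *\<^sub>R I \<in> U \<longrightarrow> qreal u + v *\<^sub>R J \<in> U)"

definition dirderiv :: "'a::real_normed_vector \<Rightarrow> ('a \<Rightarrow> 'b::real_normed_vector) \<Rightarrow> 'a \<Rightarrow> 'b" where
  "dirderiv v g x = vector_derivative (\<lambda>t::real. g (x + t *\<^sub>R v)) (at 0)"

fun Ck :: "nat \<Rightarrow> 'a::euclidean_space set \<Rightarrow> ('a \<Rightarrow> 'b::real_normed_vector) \<Rightarrow> bool" where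
  "Ck 0 S g = continuous_on S g"
| "Ck (Suc k) S g = (continuous_on S g \<and>
     (\<forall>b\<in>Basis. (\<forall>x\<in>S. (\<lambda>t::real. g (x + t *\<^sub>R b)) differentiable (at 0))
                 \<and> Ck k S (dirderiv b g)))"

definition fueter :: "(quat \<Rightarrow> quat) \<Rightarrow> quat \<Rightarrow> quat" where
  "fueter f q = dirderiv (e 0) f q + (\<Sum>i\<in>{1,2,3}. qmult (e i) (dirderiv (e i) f q))"

definition laplace :: "(quat \<Rightarrow> quat) \<Rightarrow> quat \<Rightarrow> quat" where
  "laplace g q = (\<Sum>i\<in>UNIV. dirderiv (e i) (dirderiv (e i) g) q)"

definition axially_harmonic :: "quat set \<Rightarrow> (quat \<Rightarrow> quat) \<Rightarrow> bool" where
  "axially_harmonic U ft \<longleftrightarrow>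
     (\<exists>f (\<alpha>::real \<Rightarrow> real \<Rightarrow> quat) (\<beta>::real \<Rightarrow> real \<Rightarrow> quat).
        Ck 3 U f \<and>
        (\<forall>u v J. J \<in> qS \<longrightarrow> v > 0 \<longrightarrow> qreal u + v *\<^sub>R J \<in> U \<longrightarrow>
            f (qreal u + v *\<^sub>R J) = \<alpha> u v + qmult J (\<beta> u v)) \<and>
        (\<forall>q\<in>U. ft q = fueter f q)) \<and>
     (\<forall>q\<in>U. laplace ft q = 0)"

end

theory Submission
  imports Defs
begin

lemma four_eq0: "(4::4) = 0" by simp

lemma forall_4': "(\<forall>i::4. P i) \<longleftrightarrow> P 0 \<and> P 1 \<and> P 2 \<and> P 3"
  unfolding forall_4 four_eq0 by blast

lemma sum_4': "sum f (UNIV::4 set) = f 0 + f 1 + f 2 + f 3"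
  unfolding sum_4 four_eq0 by (simp add: ac_simps)

lemma rho_d1:
  fixes r c t :: real
  assumes "r^2 + 2*c*t + t^2 > 0"
  shows "((\<lambda>t. sqrt (r^2 + 2*c*t + t^2)) has_real_derivative (c+t)/sqrt(r^2 + 2*c*t + t^2)) (at t)"
  using assms
  by (auto intro!: derivative_eq_intros simp: field_simps)

lemma rho_d2:
  fixes r c :: real
  assumes "r > 0"
  shows "((\<lambda>t. (c+t)/sqrt (r^2 + 2*c*t + t^2)) has_real_derivative (1/r - c^2/r^3)) (at 0)"
proof -
  have e: "sqrt (r^2) = r" using assms by simp
  show ?thesis
    using assms
    by (auto intro!: derivative_eq_intros simp: e field_simps power2_eq_square power3_eq_cube)
qed


lemma qmult_bb: "bounded_bilinear qmult"
proof -
  have "bilinear qmult"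
    unfolding bilinear_def
    by (auto intro!: linearI simp: vec_eq_iff qmult_def algebra_simps)
  then show ?thesis by (simp add: bilinear_conv_bounded_bilinear)
qed

lemma shift_vd:
  assumes "(g has_vector_derivative D) (at 0)"
  shows "((\<lambda>t. g (t - s)) has_vector_derivative D) (at s)"
proof -
  have "((\<lambda>t::real. t - s) has_vector_derivative 1) (at s)"
    by (auto intro!: derivative_eq_intros)
  from vector_diff_chain_at[OF this, of g D] assms show ?thesis by (simp add: o_def)
qed

lemma Ck_vd:
  assumes "Ck (Suc k) S F" "y + s *\<^sub>R b \<in> S" "b \<in> Basis"
  shows "((\<lambda>t. F (y + t *\<^sub>R b)) has_vector_derivative dirderiv b F (y + s *\<^sub>R b)) (at s)"
proof -
  have "(\<lambda>t::real. F ((y + s *\<^sub>R b) + t *\<^sub>R b)) differentiable (at 0)"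
    using assms by auto
  hence "((\<lambda>t::real. F ((y + s *\<^sub>R b) + t *\<^sub>R b)) has_vector_derivative dirderiv b F (y + s *\<^sub>R b)) (at 0)"
    unfolding dirderiv_def by (simp add: vector_derivative_works)
  from shift_vd[OF this, of s] show ?thesis
    by (simp add: algebra_simps)
qed

lemma line2:
  fixes f :: "'a::real_normed_vector \<Rightarrow> 'b::real_normed_vector"
  assumes "d > 0" "\<And>t. \<bar>t\<bar> < d \<Longrightarrow> (G has_vector_derivative G1 t) (at t)"
    "\<And>t. \<bar>t\<bar> < d \<Longrightarrow> f (Q + t *\<^sub>R v) = G t"
    "(G1 has_vector_derivative G2) (at 0)"
  shows "dirderiv v (dirderiv v f) Q = G2"
proof -
  have 1: "dirderiv v f (Q + s *\<^sub>R v) = G1 s" if s: "\<bar>s\<bar> < d" for s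
  proof -
    have "((\<lambda>t. G (s + t)) has_vector_derivative G1 s) (at 0)"
    proof -
      have "((\<lambda>t::real. s + t) has_vector_derivative 1) (at 0)"
        by (auto intro!: derivative_eq_intros)
      from vector_diff_chain_at[OF this, of G "G1 s"] assms(2)[OF s] show ?thesis by (simp add: o_def)
    qed
    hence "((\<lambda>t. f (Q + s *\<^sub>R v + t *\<^sub>R v)) has_vector_derivative G1 s) (at 0)"
      apply (rule has_vector_derivative_transform_within_open[where S="ball 0 (d - \<bar>s\<bar>)"])
      using s apply (auto simp: dist_real_def)
      apply (subst assms(3)[symmetric])
      apply (auto simp: algebra_simps)
      done
    thus ?thesis unfolding dirderiv_def by (rule vector_derivative_at)
  qed
  have "((\<lambda>s. dirderiv v f (Q + s *\<^sub>R v)) has_vector_derivative G2) (at 0)"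
    apply (rule has_vector_derivative_transform_within_open[OF assms(4), where S="ball 0 d"])
    using assms(1) by (auto simp: 1 dist_real_def)
  thus ?thesis unfolding dirderiv_def[of v "dirderiv v f"] by (rule vector_derivative_at)
qed



lemma dir_i:
  fixes a a1 k kp :: "real \<Rightarrow> quat" and f :: "quat \<Rightarrow> quat"
  assumes d: "d > 0" and r: "r > 0"
    and pos: "\<And>t. \<bar>t\<bar> < d \<Longrightarrow> r^2 + 2*c*t + t^2 > 0"
    and G: "\<And>t. \<bar>t\<bar> < d \<Longrightarrow> f (Q + t *\<^sub>R v) = a (sqrt (r^2 + 2*c*t + t^2)) + qmult (x + t *\<^sub>R v) (k (sqrt (r^2 + 2*c*t + t^2)))"
    and ad: "\<And>t. \<bar>t\<bar> < d \<Longrightarrow> (a has_vector_derivative a1 (sqrt (r^2 + 2*c*t + t^2))) (at (sqrt (r^2 + 2*c*t + t^2)))"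
    and kd: "\<And>t. \<bar>t\<bar> < d \<Longrightarrow> (k has_vector_derivative kp (sqrt (r^2 + 2*c*t + t^2))) (at (sqrt (r^2 + 2*c*t + t^2)))"
    and a1d: "(a1 has_vector_derivative a2) (at r)"
    and k1d: "(kp has_vector_derivative k2) (at r)"
  shows "dirderiv v (dirderiv v f) Q =
     ((1/r - c^2/r^3) *\<^sub>R a1 r + (c/r * (c/r)) *\<^sub>R a2)
     + (qmult v ((c/r) *\<^sub>R kp r) + (qmult v ((c/r) *\<^sub>R kp r)
     + qmult x ((1/r - c^2/r^3) *\<^sub>R kp r + (c/r * (c/r)) *\<^sub>R k2)))"
proof -
  define R where "R t = sqrt (r^2 + 2*c*t + t^2)" for t
  define R1 where "R1 t = (c+t) / R t" for t
  have R0: "R 0 = r" using r by (simp add: R_def)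
  have R10: "R1 0 = c/r" using R0 by (simp add: R1_def)
  have Rd: "(R has_real_derivative R1 t) (at t)" if "\<bar>t\<bar> < d" for t
    unfolding R_def R1_def using rho_d1[OF pos[OF that]] .
  have R1d: "(R1 has_real_derivative (1/r - c^2/r^3)) (at 0)"
    unfolding R_def R1_def using rho_d2[OF r] .
  have R1d': "(R1 has_vector_derivative (1/r - c^2/r^3)) (at 0)"
    using R1d by (simp add: has_real_derivative_iff_has_vector_derivative)
  have Rdv: "(R has_vector_derivative R1 t) (at t)" if "\<bar>t\<bar> < d" for t
    using Rd[OF that] by (simp add: has_real_derivative_iff_has_vector_derivative)
  have chainA: "((\<lambda>t. a (R t)) has_vector_derivative R1 t *\<^sub>R a1 (R t)) (at t)" if "\<bar>t\<bar> < d" for t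
    using vector_diff_chain_at[OF Rdv[OF that], of a] ad[OF that] by (simp add: o_def R_def)
  have chainK: "((\<lambda>t. k (R t)) has_vector_derivative R1 t *\<^sub>R kp (R t)) (at t)" if "\<bar>t\<bar> < d" for t
    using vector_diff_chain_at[OF Rdv[OF that], of k] kd[OF that] by (simp add: o_def R_def)
  have a1R: "((\<lambda>t. a1 (R t)) has_vector_derivative R1 0 *\<^sub>R a2) (at 0)"
    using vector_diff_chain_at[OF Rdv[of 0], of a1] a1d d R0 by (simp add: o_def)
  have k1R: "((\<lambda>t. kp (R t)) has_vector_derivative R1 0 *\<^sub>R k2) (at 0)"
    using vector_diff_chain_at[OF Rdv[of 0], of kp] k1d d R0 by (simp add: o_def)
  have lin: "((\<lambda>t. x + t *\<^sub>R v) has_vector_derivative v) (at t)" for t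
    by (auto intro!: derivative_eq_intros)
  note bb = bounded_bilinear.has_vector_derivative[OF qmult_bb]
  show ?thesis
  proof (rule line2[OF d])
    fix t :: real assume t: "\<bar>t\<bar> < d"
    show "f (Q + t *\<^sub>R v) = a (R t) + qmult (x + t *\<^sub>R v) (k (R t))"
      using G[OF t] by (simp add: R_def)
    show "((\<lambda>t. a (R t) + qmult (x + t *\<^sub>R v) (k (R t))) has_vector_derivative
        (R1 t *\<^sub>R a1 (R t) + (qmult (x + t *\<^sub>R v) (R1 t *\<^sub>R kp (R t)) + qmult v (k (R t))))) (at t)"
      by (intro has_vector_derivative_add chainA[OF t] bb[OF lin chainK[OF t]])
  next
    have "((\<lambda>t. R1 t *\<^sub>R a1 (R t) + (qmult (x + t *\<^sub>R v) (R1 t *\<^sub>R kp (R t)) + qmult v (k (R t))))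
      has_vector_derivative
       ((R1 0 *\<^sub>R (R1 0 *\<^sub>R a2) + (1/r - c^2/r^3) *\<^sub>R a1 (R 0)) +
        ((qmult (x + 0 *\<^sub>R v) (R1 0 *\<^sub>R (R1 0 *\<^sub>R k2) + (1/r - c^2/r^3) *\<^sub>R kp (R 0)) + qmult v (R1 0 *\<^sub>R kp (R 0)))
        + qmult v (R1 0 *\<^sub>R kp (R 0))))) (at 0)"
      apply (intro has_vector_derivative_add has_vector_derivative_scaleR[OF R1d] a1R
          bb[OF lin] k1R bounded_linear.has_vector_derivative[OF bounded_bilinear.bounded_linear_right[OF qmult_bb]] chainK[of 0, simplified d])
      using d by auto
    then show "((\<lambda>t. R1 t *\<^sub>R a1 (R t) + (qmult (x + t *\<^sub>R v) (R1 t *\<^sub>R kp (R t)) + qmult v (k (R t))))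
      has_vector_derivative (((1/r - c^2/r^3) *\<^sub>R a1 r + (c/r * (c/r)) *\<^sub>R a2)
     + (qmult v ((c/r) *\<^sub>R kp r) + (qmult v ((c/r) *\<^sub>R kp r)
     + qmult x ((1/r - c^2/r^3) *\<^sub>R kp r + (c/r * (c/r)) *\<^sub>R k2))))) (at 0)"
      by (simp add: R0 R10 algebra_simps)
  qed
qed

lemma fin_alg0:
  fixes w a1 a2 a00 b b1 b2 b00 :: quat and r p :: real
  assumes rp: "r * p = 1" and w0: "w$0 = 0" and wn: "(w$1)^2 + (w$2)^2 + (w$3)^2 = 1"
  defines "k1 \<equiv> p *\<^sub>R b1 - (p*p) *\<^sub>R b"
  defines "k2 \<equiv> p *\<^sub>R b2 - (2*p*p) *\<^sub>R b1 + (2*p*p*p) *\<^sub>R b"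
  defines "T \<equiv> \<lambda>c v. ((p - p*c*c) *\<^sub>R a1 + (c*c) *\<^sub>R a2)
     + (qmult v (c *\<^sub>R k1) + (qmult v (c *\<^sub>R k1)
     + qmult (r *\<^sub>R w) ((p - p*c*c) *\<^sub>R k1 + (c*c) *\<^sub>R k2)))"
  shows "(a00 + qmult w b00) + T (w$1) (e 1) + T (w$2) (e 2) + T (w$3) (e 3)
     = (a00 + a2 + (2*p) *\<^sub>R a1) + qmult w (b00 + b2 + ((2*p) *\<^sub>R b1 - (2*p*p) *\<^sub>R b))"
  unfolding T_def k1_def k2_def
  apply (simp add: vec_eq_iff forall_4 qmult_def e_def axis_def w0)
  apply (intro conjI)
  using rp wn by algebra+

lemma kd1:
  fixes b :: "real \<Rightarrow> quat"
  assumes "(b has_vector_derivative b1) (at s)" "s \<noteq> 0"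
  shows "((\<lambda>s. (1/s) *\<^sub>R b s) has_vector_derivative ((1/s) *\<^sub>R b1 - (1/s^2) *\<^sub>R b s)) (at s)"
  using assms
  by (auto intro!: derivative_eq_intros simp: power2_eq_square field_simps)

lemma kd2:
  fixes b b1 :: "real \<Rightarrow> quat"
  assumes "(b has_vector_derivative b1 s) (at s)" "(b1 has_vector_derivative b2) (at s)" "s \<noteq> 0"
  shows "((\<lambda>s. (1/s) *\<^sub>R b1 s - (1/s^2) *\<^sub>R b s) has_vector_derivative
     ((1/s) *\<^sub>R b2 - (2/s^2) *\<^sub>R b1 s + (2/s^3) *\<^sub>R b s)) (at s)"
proof -
  have "((\<lambda>s. (1/s) *\<^sub>R b1 s - (1/s^2) *\<^sub>R b s) has_vector_derivative
     (((1/s) *\<^sub>R b2 + (- 1/s^2) *\<^sub>R b1 s) - ((1/s^2) *\<^sub>R b1 s + (- 2/s^3) *\<^sub>R b s))) (at s)"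
    using assms
    by (auto intro!: derivative_eq_intros simp: power2_eq_square power3_eq_cube field_simps)
  then show ?thesis by (rule has_vector_derivative_eq_rhs) (simp add: vec_eq_iff field_simps)
qed

lemma fin_alg:
  fixes w a1 a2 a00 b b1 b2 b00 :: quat and r :: real
  assumes r: "r > 0" and w0: "w$0 = 0" and wn: "(w$1)^2 + (w$2)^2 + (w$3)^2 = 1"
  defines "T \<equiv> \<lambda>i. ((1/r - (r * w$i)^2/r^3) *\<^sub>R a1 + ((r * w$i)/r * ((r * w$i)/r)) *\<^sub>R a2)
     + (qmult (e i) (((r * w$i)/r) *\<^sub>R ((1/r) *\<^sub>R b1 - (1/r^2) *\<^sub>R b))
     + (qmult (e i) (((r * w$i)/r) *\<^sub>R ((1/r) *\<^sub>R b1 - (1/r^2) *\<^sub>R b))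
     + qmult (r *\<^sub>R w) ((1/r - (r * w$i)^2/r^3) *\<^sub>R ((1/r) *\<^sub>R b1 - (1/r^2) *\<^sub>R b)
        + ((r * w$i)/r * ((r * w$i)/r)) *\<^sub>R ((1/r) *\<^sub>R b2 - (2/r^2) *\<^sub>R b1 + (2/r^3) *\<^sub>R b))))"
  shows "(a00 + qmult w b00) + T 1 + T 2 + T 3
     = (a00 + a2 + (2 / r) *\<^sub>R a1) + qmult w (b00 + b2 + (1 / r\<^sup>2) *\<^sub>R ((2 * r) *\<^sub>R b1 - 2 *\<^sub>R b))"
proof -
  define p where "p = 1/r"
  have rp: "r * p = 1" using r by (simp add: p_def)
  have s1: "(r*c)^2/r^3 = p*c*c" for c using r by (simp add: p_def power2_eq_square power3_eq_cube)
  have s2: "(r*c)/r = c" for c using r by simp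
  have s3: "1/r = p" "1/r^2 = p*p" "2/r^2 = 2*p*p" "2/r^3 = 2*p*p*p" "2/r = 2*p"
    using r by (simp_all add: p_def power2_eq_square power3_eq_cube)
  have s4: "(p*p) *\<^sub>R ((2*r) *\<^sub>R b1 - 2 *\<^sub>R b) = (2*p) *\<^sub>R b1 - (2*p*p) *\<^sub>R b"
    using rp by (simp add: algebra_simps)
  show ?thesis
    unfolding T_def s1 s2 s3 s4
    using fin_alg0[OF rp w0 wn, of a00 b00 a1 a2 b1 b b2] by simp
qed
lemma qmult_unit_cancel:
  assumes w0: "w$0 = 0" and wn: "(w$1)^2 + (w$2)^2 + (w$3)^2 = 1" and z: "qmult w y = 0"
  shows "y = 0"
proof -
  have "qmult (-w) (qmult w y) = y"
    apply (simp add: vec_eq_iff forall_4' qmult_def w0)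
    apply (intro conjI)
    using wn by algebra+
  moreover have "qmult (-w) 0 = 0" by (simp add: vec_eq_iff qmult_def)
  ultimately show ?thesis using z by simp
qed

lemma lap_at:
  fixes U :: "quat set" and ft :: "quat \<Rightarrow> quat" and A B :: "real \<times> real \<Rightarrow> quat"
  defines "S \<equiv> {(q0, r). r > 0 \<and> (\<exists>\<omega>\<in>qS. qreal q0 + r *\<^sub>R \<omega> \<in> U)}"
  assumes oU: "open U" and nr: "U \<inter> range qreal = {}"
    and rep: "\<forall>q0 r \<omega>. r > 0 \<longrightarrow> \<omega> \<in> qS \<longrightarrow> qreal q0 + r *\<^sub>R \<omega> \<in> U \<longrightarrow>
           ft (qreal q0 + r *\<^sub>R \<omega>) = A (q0, r) + qmult \<omega> (B (q0, r))"
    and CA: "Ck 2 S A" and CB: "Ck 2 S B"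
    and r: "r > 0" and w: "w \<in> qS" and QU: "qreal q0 + r *\<^sub>R w \<in> U"
  shows "laplace ft (qreal q0 + r *\<^sub>R w) =
     (dirderiv (1, 0) (dirderiv (1, 0) A) (q0, r) + dirderiv (0, 1) (dirderiv (0, 1) A) (q0, r)
       + (2 / r) *\<^sub>R dirderiv (0, 1) A (q0, r))
   + qmult w (dirderiv (1, 0) (dirderiv (1, 0) B) (q0, r) + dirderiv (0, 1) (dirderiv (0, 1) B) (q0, r)
       + (1 / r\<^sup>2) *\<^sub>R ((2 * r) *\<^sub>R dirderiv (0, 1) B (q0, r) - 2 *\<^sub>R B (q0, r)))"
proof -
  define Q where "Q = qreal q0 + r *\<^sub>R w"
  obtain \<epsilon> where \<epsilon>: "\<epsilon> > 0" "ball Q \<epsilon> \<subseteq> U"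
    using oU QU open_contains_ball unfolding Q_def by blast
  have w0: "w$0 = 0" and wn: "(w$1)^2 + (w$2)^2 + (w$3)^2 = 1" using w by (auto simp: qS_def)
  have B10: "(1::real, 0::real) \<in> Basis" and B01: "(0::real, 1::real) \<in> Basis"
    by (auto simp: Basis_prod_def)
  have CA': "Ck (Suc (Suc 0)) S A" using CA by (simp only: numeral_2_eq_2)
  have CB': "Ck (Suc (Suc 0)) S B" using CB by (simp only: numeral_2_eq_2)
  have CA1: "\<forall>b\<in>Basis. Ck (Suc 0) S (dirderiv b A)" using CA' by (subst (asm) Ck.simps) blast
  have CB1: "\<forall>b\<in>Basis. Ck (Suc 0) S (dirderiv b B)" using CB' by (subst (asm) Ck.simps) blast
  have inS: "(q0', r') \<in> S" if "r' > 0" "w' \<in> qS" "qreal q0' + r' *\<^sub>R w' \<in> U" for q0' r' w'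
    using that by (auto simp: S_def)
  have lineU: "Q + t *\<^sub>R e i \<in> U" if "\<bar>t\<bar> < \<epsilon>" for t i
    using that \<epsilon>(2) by (auto simp: dist_norm e_def)
  have lin_w: "bounded_linear (qmult w)"
    by (rule bounded_bilinear.bounded_linear_right[OF qmult_bb])
  note blv = bounded_linear.has_vector_derivative[OF lin_w]
  have T0: "dirderiv (e 0) (dirderiv (e 0) ft) Q =
      dirderiv (1, 0) (dirderiv (1, 0) A) (q0, r) + qmult w (dirderiv (1, 0) (dirderiv (1, 0) B) (q0, r))"
  proof (rule line2[OF \<epsilon>(1)])
    fix t :: real assume t: "\<bar>t\<bar> < \<epsilon>"
    have eq: "Q + t *\<^sub>R e 0 = qreal (q0 + t) + r *\<^sub>R w"
      by (simp add: Q_def qreal_def algebra_simps)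
    have inU: "qreal (q0 + t) + r *\<^sub>R w \<in> U" using lineU[OF t, of 0] eq by simp
    have S1: "(q0, r) + t *\<^sub>R (1, 0) \<in> S" using inS[OF r w inU] by simp
    show "ft (Q + t *\<^sub>R e 0) = A ((q0, r) + t *\<^sub>R (1, 0)) + qmult w (B ((q0, r) + t *\<^sub>R (1, 0)))"
      using rep r w inU eq by simp
    show "((\<lambda>t. A ((q0, r) + t *\<^sub>R (1, 0)) + qmult w (B ((q0, r) + t *\<^sub>R (1, 0)))) has_vector_derivative
       (dirderiv (1, 0) A ((q0, r) + t *\<^sub>R (1, 0)) + qmult w (dirderiv (1, 0) B ((q0, r) + t *\<^sub>R (1, 0))))) (at t)"
      by (intro has_vector_derivative_add blv Ck_vd[OF CA' S1 B10] Ck_vd[OF CB' S1 B10])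
  next
    have S0: "(q0, r) + 0 *\<^sub>R (1, 0) \<in> S" using inS[OF r w QU] by simp
    show "((\<lambda>t. dirderiv (1, 0) A ((q0, r) + t *\<^sub>R (1, 0)) + qmult w (dirderiv (1, 0) B ((q0, r) + t *\<^sub>R (1, 0))))
       has_vector_derivative (dirderiv (1, 0) (dirderiv (1, 0) A) (q0, r) + qmult w (dirderiv (1, 0) (dirderiv (1, 0) B) (q0, r)))) (at 0)"
      using has_vector_derivative_add[OF Ck_vd[OF CA1[rule_format, OF B10] S0 B10] blv[OF Ck_vd[OF CB1[rule_format, OF B10] S0 B10]]]
      by simp
  qed
  define Ab where "Ab s = A ((q0, 0) + s *\<^sub>R (0, 1))" for s
  define Ab1 where "Ab1 s = dirderiv (0, 1) A ((q0, 0) + s *\<^sub>R (0, 1))" for s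
  define Bb where "Bb s = B ((q0, 0) + s *\<^sub>R (0, 1))" for s
  define Bb1 where "Bb1 s = dirderiv (0, 1) B ((q0, 0) + s *\<^sub>R (0, 1))" for s
  define A2 where "A2 = dirderiv (0, 1) (dirderiv (0, 1) A) (q0, r)"
  define B2 where "B2 = dirderiv (0, 1) (dirderiv (0, 1) B) (q0, r)"
  have Abd: "(Ab has_vector_derivative Ab1 s) (at s)" if "(q0, s) \<in> S" for s
    unfolding Ab_def Ab1_def by (rule Ck_vd[OF CA' _ B01]) (use that in simp)
  have Bbd: "(Bb has_vector_derivative Bb1 s) (at s)" if "(q0, s) \<in> S" for s
    unfolding Bb_def Bb1_def by (rule Ck_vd[OF CB' _ B01]) (use that in simp)
  have qrS: "(q0, r) \<in> S" using inS[OF r w QU] .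
  have Ab1d: "(Ab1 has_vector_derivative A2) (at r)"
    unfolding Ab1_def A2_def using Ck_vd[OF CA1[rule_format, OF B01], of "(q0, 0)" r "(0, 1)"] qrS B01 by simp
  have Bb1d: "(Bb1 has_vector_derivative B2) (at r)"
    unfolding Bb1_def B2_def using Ck_vd[OF CB1[rule_format, OF B01], of "(q0, 0)" r "(0, 1)"] qrS B01 by simp
  have Ti: "dirderiv (e i) (dirderiv (e i) ft) Q =
     ((1/r - (r * w$i)^2/r^3) *\<^sub>R Ab1 r + ((r * w$i)/r * ((r * w$i)/r)) *\<^sub>R A2)
     + (qmult (e i) (((r * w$i)/r) *\<^sub>R ((1/r) *\<^sub>R Bb1 r - (1/r^2) *\<^sub>R Bb r))
     + (qmult (e i) (((r * w$i)/r) *\<^sub>R ((1/r) *\<^sub>R Bb1 r - (1/r^2) *\<^sub>R Bb r))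
     + qmult (r *\<^sub>R w) ((1/r - (r * w$i)^2/r^3) *\<^sub>R ((1/r) *\<^sub>R Bb1 r - (1/r^2) *\<^sub>R Bb r)
        + ((r * w$i)/r * ((r * w$i)/r)) *\<^sub>R ((1/r) *\<^sub>R B2 - (2/r^2) *\<^sub>R Bb1 r + (2/r^3) *\<^sub>R Bb r))))"
    if i: "i = 1 \<or> i = 2 \<or> i = 3" for i
  proof -
    define c where "c = r * w$i"
    have key: "r^2 + 2*c*t + t^2 > 0 \<and> (q0, sqrt (r^2 + 2*c*t + t^2)) \<in> S \<and>
       ft (Q + t *\<^sub>R e i) = Ab (sqrt (r^2 + 2*c*t + t^2)) +
         qmult (r *\<^sub>R w + t *\<^sub>R e i) ((1 / sqrt (r^2 + 2*c*t + t^2)) *\<^sub>R Bb (sqrt (r^2 + 2*c*t + t^2)))"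
      if t: "\<bar>t\<bar> < \<epsilon>" for t
    proof -
      define y where "y = r *\<^sub>R w + t *\<^sub>R e i"
      define z where "z = Q + t *\<^sub>R e i"
      have zU: "z \<in> U" unfolding z_def by (rule lineU[OF t])
      have zy: "z = qreal q0 + y" by (simp add: z_def y_def Q_def)
      have y0: "y$0 = 0" using i w0 by (auto simp: y_def e_def axis_def)
      have sq: "r^2 + 2*c*t + t^2 = (y$1)^2 + (y$2)^2 + (y$3)^2"
      proof -
        have "r*r*((w$1)^2+(w$2)^2+(w$3)^2) = r*r" by (simp add: wn)
        then have rr: "r * r = r * (r * (w$1 * w$1)) + (r * (r * (w$2 * w$2)) + r * (r * (w$3 * w$3)))"
          by (simp add: algebra_simps power2_eq_square)
        show ?thesis
          using i unfolding c_def y_def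
          by (auto simp: e_def axis_def power2_eq_square algebra_simps) (use rr in simp)+
      qed
      have nz: "\<not> (y$1 = 0 \<and> y$2 = 0 \<and> y$3 = 0)"
      proof
        assume "y$1 = 0 \<and> y$2 = 0 \<and> y$3 = 0"
        then have "y = 0" using y0 by (auto simp: vec_eq_iff forall_4')
        then have "z \<in> range qreal" using zy by simp
        then show False using zU nr by blast
      qed
      have pos: "r^2 + 2*c*t + t^2 > 0" unfolding sq using nz
      proof -
        have a: "(y$1)^2 \<ge> 0" "(y$2)^2 \<ge> 0" "(y$3)^2 \<ge> 0" by simp_all
        have "(y$1)^2 > 0 \<or> (y$2)^2 > 0 \<or> (y$3)^2 > 0" using nz by auto
        then show "0 < (y$1)^2 + (y$2)^2 + (y$3)^2" using a by linarith
      qed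
      define \<rho> where "\<rho> = sqrt (r^2 + 2*c*t + t^2)"
      have rho: "\<rho> > 0" using pos by (simp add: \<rho>_def)
      have rho2: "\<rho>^2 = (y$1)^2 + (y$2)^2 + (y$3)^2" using pos sq by (simp add: \<rho>_def)
      define w' where "w' = (1/\<rho>) *\<^sub>R y"
      have w'S: "w' \<in> qS"
      proof -
        have "((1/\<rho>)*y$1)^2 + ((1/\<rho>)*y$2)^2 + ((1/\<rho>)*y$3)^2 = ((y$1)^2+(y$2)^2+(y$3)^2)/\<rho>^2"
          by (simp add: power_mult_distrib power_divide add_divide_distrib)
        also have "\<dots> = 1" using rho2 rho by (simp add: rho2[symmetric])
        finally show ?thesis unfolding qS_def w'_def using y0 by simp
      qed
      have zw: "z = qreal q0 + \<rho> *\<^sub>R w'" using rho by (simp add: zy w'_def)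
      have "ft z = A (q0, \<rho>) + qmult w' (B (q0, \<rho>))"
        using rep rho w'S zU zw by simp
      also have "\<dots> = Ab \<rho> + qmult y ((1/\<rho>) *\<^sub>R Bb \<rho>)"
        by (simp add: Ab_def Bb_def w'_def bounded_bilinear.scaleR_left[OF qmult_bb]
            bounded_bilinear.scaleR_right[OF qmult_bb])
      finally have "ft z = Ab \<rho> + qmult y ((1/\<rho>) *\<^sub>R Bb \<rho>)" .
      moreover have "(q0, \<rho>) \<in> S" using inS[OF rho w'S] zU zw by simp
      ultimately show ?thesis using pos unfolding \<rho>_def y_def z_def by simp
    qed
    have "dirderiv (e i) (dirderiv (e i) ft) Q =
     ((1/r - c^2/r^3) *\<^sub>R Ab1 r + (c/r * (c/r)) *\<^sub>R A2)
     + (qmult (e i) ((c/r) *\<^sub>R ((1/r) *\<^sub>R Bb1 r - (1/r^2) *\<^sub>R Bb r))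
     + (qmult (e i) ((c/r) *\<^sub>R ((1/r) *\<^sub>R Bb1 r - (1/r^2) *\<^sub>R Bb r))
     + qmult (r *\<^sub>R w) ((1/r - c^2/r^3) *\<^sub>R ((1/r) *\<^sub>R Bb1 r - (1/r^2) *\<^sub>R Bb r)
        + (c/r * (c/r)) *\<^sub>R ((1/r) *\<^sub>R B2 - (2/r^2) *\<^sub>R Bb1 r + (2/r^3) *\<^sub>R Bb r))))"
    proof (rule dir_i[OF \<epsilon>(1) r, where k = "\<lambda>s. (1/s) *\<^sub>R Bb s"
          and kp = "\<lambda>s. (1/s) *\<^sub>R Bb1 s - (1/s^2) *\<^sub>R Bb s"])
      fix t :: real assume t: "\<bar>t\<bar> < \<epsilon>"
      note kt = key[OF t]
      show "r^2 + 2*c*t + t^2 > 0" using kt by simp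
      show "ft (Q + t *\<^sub>R e i) = Ab (sqrt (r^2 + 2*c*t + t^2)) +
         qmult (r *\<^sub>R w + t *\<^sub>R e i) ((\<lambda>s. (1/s) *\<^sub>R Bb s) (sqrt (r^2 + 2*c*t + t^2)))"
        using kt by simp
      show "(Ab has_vector_derivative Ab1 (sqrt (r^2 + 2*c*t + t^2))) (at (sqrt (r^2 + 2*c*t + t^2)))"
        using kt Abd by simp
      show "((\<lambda>s. (1/s) *\<^sub>R Bb s) has_vector_derivative
         (\<lambda>s. (1/s) *\<^sub>R Bb1 s - (1/s^2) *\<^sub>R Bb s) (sqrt (r^2 + 2*c*t + t^2))) (at (sqrt (r^2 + 2*c*t + t^2)))"
        by (rule kd1[OF Bbd]) (use kt in auto)
    next
      show "(Ab1 has_vector_derivative A2) (at r)" by (rule Ab1d)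
      show "((\<lambda>s. (1/s) *\<^sub>R Bb1 s - (1/s^2) *\<^sub>R Bb s) has_vector_derivative
         ((1/r) *\<^sub>R B2 - (2/r^2) *\<^sub>R Bb1 r + (2/r^3) *\<^sub>R Bb r)) (at r)"
        using kd2[OF Bbd[OF qrS] Bb1d] r by simp
    qed
    then show ?thesis by (simp add: c_def)
  qed
  have "laplace ft Q = dirderiv (e 0) (dirderiv (e 0) ft) Q + dirderiv (e 1) (dirderiv (e 1) ft) Q
     + dirderiv (e 2) (dirderiv (e 2) ft) Q + dirderiv (e 3) (dirderiv (e 3) ft) Q"
    by (simp add: laplace_def sum_4')
  also have "\<dots> = (a00 + a2 + (2 / r) *\<^sub>R a1) + qmult w (b00 + b2 + (1 / r\<^sup>2) *\<^sub>R ((2 * r) *\<^sub>R b1 - 2 *\<^sub>R b))"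
    if "a00 = dirderiv (1, 0) (dirderiv (1, 0) A) (q0, r)" "b00 = dirderiv (1, 0) (dirderiv (1, 0) B) (q0, r)"
      "a1 = Ab1 r" "a2 = A2" "b = Bb r" "b1 = Bb1 r" "b2 = B2" for a00 a1 a2 b00 b b1 b2
    unfolding T0 Ti[OF disjI1[OF refl]] Ti[OF disjI2[OF disjI1[OF refl]]] Ti[OF disjI2[OF disjI2[OF refl]]] that
    by (rule fin_alg[OF r w0 wn])
  finally show ?thesis unfolding Q_def
    by (simp add: Ab1_def Bb_def Bb1_def A2_def B2_def)
qed

theorem theorem3p4:
  fixes U :: "quat set" and ft :: "quat \<Rightarrow> quat"
    and A B :: "real \<times> real \<Rightarrow> quat"
  assumes "open U" and "axially_symmetric U" and "U \<inter> range qreal = {}"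
    and "axially_harmonic U ft"
    and "\<forall>q0 r \<omega>. r > 0 \<longrightarrow> \<omega> \<in> qS \<longrightarrow> qreal q0 + r *\<^sub>R \<omega> \<in> U \<longrightarrow>
           ft (qreal q0 + r *\<^sub>R \<omega>) = A (q0, r) + qmult \<omega> (B (q0, r))"
    and "Ck 2 {(q0, r). r > 0 \<and> (\<exists>\<omega>\<in>qS. qreal q0 + r *\<^sub>R \<omega> \<in> U)} A"
    and "Ck 2 {(q0, r). r > 0 \<and> (\<exists>\<omega>\<in>qS. qreal q0 + r *\<^sub>R \<omega> \<in> U)} B"
  shows "\<forall>q0 r. r > 0 \<and> (\<exists>\<omega>\<in>qS. qreal q0 + r *\<^sub>R \<omega> \<in> U) \<longrightarrow>
     dirderiv (1, 0) (dirderiv (1, 0) A) (q0, r) + dirderiv (0, 1) (dirderiv (0, 1) A) (q0, r)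
       + (2 / r) *\<^sub>R dirderiv (0, 1) A (q0, r) = 0
   \<and> dirderiv (1, 0) (dirderiv (1, 0) B) (q0, r) + dirderiv (0, 1) (dirderiv (0, 1) B) (q0, r)
       + (1 / r\<^sup>2) *\<^sub>R ((2 * r) *\<^sub>R dirderiv (0, 1) B (q0, r) - 2 *\<^sub>R B (q0, r)) = 0"
proof (intro allI impI)
  fix q0 r :: real
  assume "r > 0 \<and> (\<exists>\<omega>\<in>qS. qreal q0 + r *\<^sub>R \<omega> \<in> U)"
  then obtain w where r: "r > 0" and w: "w \<in> qS" and QU: "qreal q0 + r *\<^sub>R w \<in> U" by blast
  have lap0: "\<forall>q\<in>U. laplace ft q = 0" using assms(4) unfolding axially_harmonic_def by blast
  have mw: "-w \<in> qS" using w by (simp add: qS_def)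
  have QU': "qreal q0 + r *\<^sub>R (-w) \<in> U"
    using assms(2)[unfolded axially_symmetric_def, rule_format, OF w mw QU] .
  note L = lap_at[OF assms(1) assms(3) assms(5) assms(6) assms(7) r]
  define X where "X = dirderiv (1, 0) (dirderiv (1, 0) A) (q0, r) + dirderiv (0, 1) (dirderiv (0, 1) A) (q0, r)
       + (2 / r) *\<^sub>R dirderiv (0, 1) A (q0, r)"
  define Y where "Y = dirderiv (1, 0) (dirderiv (1, 0) B) (q0, r) + dirderiv (0, 1) (dirderiv (0, 1) B) (q0, r)
       + (1 / r\<^sup>2) *\<^sub>R ((2 * r) *\<^sub>R dirderiv (0, 1) B (q0, r) - 2 *\<^sub>R B (q0, r))"
  have e1': "X + qmult w Y = laplace ft (qreal q0 + r *\<^sub>R w)"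
    unfolding X_def Y_def by (rule sym[OF L[OF w QU]])
  have e2': "X + qmult (-w) Y = laplace ft (qreal q0 + r *\<^sub>R (-w))"
    unfolding X_def Y_def by (rule sym[OF L[OF mw QU']])
  have e1: "X + qmult w Y = 0" unfolding e1' using lap0 QU by blast
  have e2: "X + qmult (-w) Y = 0" unfolding e2' using lap0 QU' by blast
  have "qmult (-w) Y = - qmult w Y"
    by (rule bounded_bilinear.minus_left[OF qmult_bb])
  then have e3: "X - qmult w Y = 0" using e2 by simp
  have XY: "X = qmult w Y" using e3 by simp
  have "qmult w Y + qmult w Y = 0" using e1 unfolding XY .
  then have "2 *\<^sub>R qmult w Y = 0" by (simp only: scaleR_2)
  then have Z: "qmult w Y = 0" by simp
  have X0: "X = 0" unfolding XY by (rule Z)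
  have w0: "w$0 = 0" and wn: "(w$1)^2 + (w$2)^2 + (w$3)^2 = 1" using w by (auto simp: qS_def)
  have "Y = 0" by (rule qmult_unit_cancel[OF w0 wn Z])
  with X0 show "X = 0 \<and> Y = 0" unfolding X_def Y_def by (rule conjI)
qed

end
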